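(* Let $r\in\mathbb{N}^{\times}$ and $(\alpha_1,\dots,\alpha_r)\in(\mathbb{N}^{\times})^r$. Put $a_0=1$, $a_i=\alpha_i(a_0+\cdots+a_{i-1})$ for $1\le i\le r$, and $n=a_0+\cdots+a_r$. Then $\mathfrak p_s(a_0,\dots,a_r)$ is a Frobenius subalgebra of $\mathfrak{sl}(n)$.
   Context: All Lie algebras are over $\mathbb{C}$. The index of a Lie algebra $\mathfrak g$ is $\chi[\mathfrak g]=\min_{f\in\mathfrak g^*}\dim\{x\in\mathfrak g: f([x,y])=0\ \forall y\in\mathfrak g\}$; $\mathfrak g$ is Frobenius if its index is $0$. For a composition $(a_0,\dots,a_r)$ of $n$, $\mathfrak p(a_0,\dots,a_r)\subset\mathfrak{gl}(n)$ is the standard parabolic subalgebra of block upper triangular matrices with diagonal blocks of sizes $a_0,\dots,a_r$, and $\mathfrak p_s(a_0,\dots,a_r)=\mathfrak p(a_0,\dots,a_r)\cap\mathfrak{sl}(n)$. *)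

theory Defs
  imports Complex_Main "HOL-Library.Function_Algebras"
begin

text \<open>Square matrices of size n are modelled as functions nat => nat => complex
  vanishing outside the index range {0..<n} x {0..<n}.\<close>

type_synonym cmat = "nat \<Rightarrow> nat \<Rightarrow> complex"

definition mscale :: "complex \<Rightarrow> cmat \<Rightarrow> cmat" where
  "mscale c A = (\<lambda>i j. c * A i j)"

definition matsp :: "nat \<Rightarrow> cmat set" where
  "matsp n = {A. \<forall>i j. (n \<le> i \<or> n \<le> j) \<longrightarrow> A i j = 0}"

definition commutator :: "nat \<Rightarrow> cmat \<Rightarrow> cmat \<Rightarrow> cmat" where
  "commutator n A B = (\<lambda>i j. (\<Sum>k<n. A i k * B k j) - (\<Sum>k<n. B i k * A k j))"

definition mtrace :: "nat \<Rightarrow> cmat \<Rightarrow> complex" where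
  "mtrace n A = (\<Sum>i<n. A i i)"

text \<open>Composition given as a list of block sizes (a_0,...,a_r); blk as i is the index of
  the diagonal block containing row/column i.\<close>

definition blk :: "nat list \<Rightarrow> nat \<Rightarrow> nat" where
  "blk as i = (LEAST k. i < sum_list (take (Suc k) as))"

definition parabolic :: "nat list \<Rightarrow> cmat set" where
  "parabolic as = {A \<in> matsp (sum_list as).
      \<forall>i<sum_list as. \<forall>j<sum_list as. blk as j < blk as i \<longrightarrow> A i j = 0}"

definition parabolic_s :: "nat list \<Rightarrow> cmat set" where
  "parabolic_s as = {A \<in> parabolic as. mtrace (sum_list as) A = 0}"

definition linear_on :: "cmat set \<Rightarrow> (cmat \<Rightarrow> complex) \<Rightarrow> bool" where
  "linear_on g f \<longleftrightarrow> (\<forall>x\<in>g. \<forall>y\<in>g. f (x + y) = f x + f y) \<and>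
                      (\<forall>c. \<forall>x\<in>g. f (mscale c x) = c * f x)"

definition stab :: "nat \<Rightarrow> cmat set \<Rightarrow> (cmat \<Rightarrow> complex) \<Rightarrow> cmat set" where
  "stab n g f = {x \<in> g. \<forall>y\<in>g. f (commutator n x y) = 0}"

definition lie_index :: "nat \<Rightarrow> cmat set \<Rightarrow> nat" where
  "lie_index n g = (LEAST d. \<exists>f. linear_on g f \<and> d = vector_space.dim mscale (stab n g f))"

definition frobenius :: "nat \<Rightarrow> cmat set \<Rightarrow> bool" where
  "frobenius n g \<longleftrightarrow> lie_index n g = 0"

end

theory Submission
  imports Defs
begin


lemma sum_split_add: "(\<Sum>k<M+(c::nat). g k) = (\<Sum>k<M. g k) + (\<Sum>k<c. g (M+k)::'a::comm_monoid_add)"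
  by (induction c) (auto simp: add.assoc)

definition good :: "nat \<Rightarrow> (nat \<Rightarrow> nat) \<Rightarrow> cmat \<Rightarrow> bool" where
"good N b F \<longleftrightarrow> (\<forall>x. (\<forall>i j. (N \<le> i \<or> N \<le> j) \<longrightarrow> x i j = 0) \<longrightarrow>
   (\<forall>i<N. \<forall>j<N. b j < b i \<longrightarrow> x i j = 0) \<longrightarrow>
   (\<forall>i<N. \<forall>j<N. \<not> b i < b j \<longrightarrow> (\<Sum>k<N. F i k * x k j) - (\<Sum>k<N. x i k * F k j) = 0) \<longrightarrow>
   (\<exists>l. \<forall>i<N. \<forall>j<N. x i j = (if i = j then l else 0)))"

lemma reduce:
  assumes g: "good c b F'" and Mc: "M \<le> c"
    and lt: "\<forall>i<M. \<forall>j. M \<le> j \<longrightarrow> j < M+c \<longrightarrow> b i < b j"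
    and eq: "\<forall>j. M \<le> j \<longrightarrow> j < M + c \<longrightarrow> b j = b M"
  shows "good (M+c) b (\<lambda>i k. if M \<le> i \<and> M \<le> k then F' (i-M) (k-M) else if i = k + M then 1 else 0)"
  unfolding good_def
proof (intro allI impI)
  fix x :: cmat
  define F where "F = (\<lambda>i k. if M \<le> i \<and> M \<le> k then F' (i-M) (k-M) else if i = k + M then 1 else (0::complex))"
  assume xs: "\<forall>i j. (M+c \<le> i \<or> M+c \<le> j) \<longrightarrow> x i j = 0"
    and xp: "\<forall>i<M+c. \<forall>j<M+c. b j < b i \<longrightarrow> x i j = 0"
    and xc: "\<forall>i<M+c. \<forall>j<M+c. \<not> b i < b j \<longrightarrow> (\<Sum>k<M+c. (\<lambda>i k. if M \<le> i \<and> M \<le> k then F' (i-M) (k-M) else if i = k + M then 1 else 0) i k * x k j) - (\<Sum>k<M+c. x i k * (\<lambda>i k. if M \<le> i \<and> M \<le> k then F' (i-M) (k-M) else if i = k + M then 1 else 0) k j) = 0"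
  have xc': "(\<Sum>k<M+c. F i k * x k j) - (\<Sum>k<M+c. x i k * F k j) = 0"
    if "i < M+c" "j < M+c" "\<not> b i < b j" for i j
    using xc that unfolding F_def by blast
  have a: "(if i' < M then x i' j else 0) = x (M+i') (M+j)" if "i' < c" "j < M" for i' j
  proof -
    have s1: "(\<Sum>k<M+c. F (M+i') k * x k j) = (if i' < M then x i' j else 0)"
    proof -
      have "(\<Sum>k<M+c. F (M+i') k * x k j) = (\<Sum>k<M. F (M+i') k * x k j) + (\<Sum>k<c. F (M+i') (M+k) * x (M+k) j)"
        by (rule sum_split_add)
      also have "(\<Sum>k<c. F (M+i') (M+k) * x (M+k) j) = 0"
        using xp lt that by (intro sum.neutral) auto
      also have "(\<Sum>k<M. F (M+i') k * x k j) = (\<Sum>k<M. if k = i' then x k j else 0)"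
        unfolding F_def by (intro sum.cong) auto
      finally show ?thesis by simp
    qed
    have s2: "(\<Sum>k<M+c. x (M+i') k * F k j) = x (M+i') (M+j)"
    proof -
      have "(\<Sum>k<M+c. x (M+i') k * F k j) = (\<Sum>k<M. x (M+i') k * F k j) + (\<Sum>k<c. x (M+i') (M+k) * F (M+k) j)"
        by (rule sum_split_add)
      also have "(\<Sum>k<M. x (M+i') k * F k j) = 0"
        unfolding F_def using that by (intro sum.neutral) auto
      also have "(\<Sum>k<c. x (M+i') (M+k) * F (M+k) j) = (\<Sum>k<c. if k = j then x (M+i') (M+k) else 0)"
        unfolding F_def using that by (intro sum.cong) auto
      finally show ?thesis using that Mc by simp
    qed
    have "\<not> b (M+i') < b j" using lt that by (metis add_less_cancel_left le_add1 less_asym' less_le_trans)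
    hence "(\<Sum>k<M+c. F (M+i') k * x k j) - (\<Sum>k<M+c. x (M+i') k * F k j) = 0"
      using that xc' by auto
    thus ?thesis using s1 s2 by simp
  qed
  have cc: "x i (M+j) = 0" if "i < M" "j < M" "\<not> b i < b j" for i j
  proof -
    have s1: "(\<Sum>k<M+c. F i k * x k j) = 0"
      unfolding F_def using that by (intro sum.neutral) auto
    have s2: "(\<Sum>k<M+c. x i k * F k j) = x i (M+j)"
    proof -
      have "(\<Sum>k<M+c. x i k * F k j) = (\<Sum>k<M. x i k * F k j) + (\<Sum>k<c. x i (M+k) * F (M+k) j)"
        by (rule sum_split_add)
      also have "(\<Sum>k<M. x i k * F k j) = 0"
        unfolding F_def using that by (intro sum.neutral) auto
      also have "(\<Sum>k<c. x i (M+k) * F (M+k) j) = (\<Sum>k<c. if k = j then x i (M+k) else 0)"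
        unfolding F_def using that by (intro sum.cong) auto
      finally show ?thesis using that Mc by simp
    qed
    show ?thesis using xc'[of i j] that s1 s2 by simp
  qed
  define S where "S = (\<lambda>i j. if i < c \<and> j < c then x (M+i) (M+j) else 0)"
  have bb: "(\<Sum>k<c. F' i' k * S k j') - (\<Sum>k<c. S i' k * F' k j') + (if i' < M then x i' (M+j') else 0) = 0"
    if "i' < c" "j' < c" for i' j'
  proof -
    have s1: "(\<Sum>k<M+c. F (M+i') k * x k (M+j')) = (if i' < M then x i' (M+j') else 0) + (\<Sum>k<c. F' i' k * S k j')"
    proof -
      have "(\<Sum>k<M+c. F (M+i') k * x k (M+j')) = (\<Sum>k<M. F (M+i') k * x k (M+j')) + (\<Sum>k<c. F (M+i') (M+k) * x (M+k) (M+j'))"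
        by (rule sum_split_add)
      also have "(\<Sum>k<c. F (M+i') (M+k) * x (M+k) (M+j')) = (\<Sum>k<c. F' i' k * S k j')"
        unfolding F_def S_def using that by (intro sum.cong) auto
      also have "(\<Sum>k<M. F (M+i') k * x k (M+j')) = (\<Sum>k<M. if k = i' then x k (M+j') else 0)"
        unfolding F_def by (intro sum.cong) auto
      finally show ?thesis by simp
    qed
    have s2: "(\<Sum>k<M+c. x (M+i') k * F k (M+j')) = (\<Sum>k<c. S i' k * F' k j')"
    proof -
      have "(\<Sum>k<M+c. x (M+i') k * F k (M+j')) = (\<Sum>k<M. x (M+i') k * F k (M+j')) + (\<Sum>k<c. x (M+i') (M+k) * F (M+k) (M+j'))"
        by (rule sum_split_add)
      also have "(\<Sum>k<M. x (M+i') k * F k (M+j')) = 0"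
        unfolding F_def using that by (intro sum.neutral) auto
      also have "(\<Sum>k<c. x (M+i') (M+k) * F (M+k) (M+j')) = (\<Sum>k<c. S i' k * F' k j')"
        unfolding F_def S_def using that by (intro sum.cong) auto
      finally show ?thesis by simp
    qed
    have "b (M+i') = b (M+j')" using eq[rule_format, of "M+i'"] eq[rule_format, of "M+j'"] that by simp
    hence "(\<Sum>k<M+c. F (M+i') k * x k (M+j')) - (\<Sum>k<M+c. x (M+i') k * F k (M+j')) = 0"
      using xc'[of "M+i'" "M+j'"] that by simp
    thus ?thesis using s1 s2 by (simp add: algebra_simps)
  qed
  have Ss: "\<forall>i j. (c \<le> i \<or> c \<le> j) \<longrightarrow> S i j = 0" unfolding S_def by auto
  have Sp: "\<forall>i<c. \<forall>j<c. b j < b i \<longrightarrow> S i j = 0"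
  proof (intro allI impI)
    fix i j assume ij: "i < c" "j < c" "b j < b i"
    show "S i j = 0"
    proof (cases "M \<le> j")
      case True
      then show ?thesis using ij eq lt Mc
        by (metis add.commute add_less_cancel_left less_asym' less_le_trans linorder_not_le trans_less_add1)
    next
      case False
      hence "j < M" by simp
      then have "x (M+i) (M+j) = (if i < M then x i j else 0)" using a ij by simp
      moreover have "i < M \<Longrightarrow> x i j = 0" using xp ij Mc by auto
      ultimately show ?thesis unfolding S_def using ij by auto
    qed
  qed
  have Sc: "\<forall>i<c. \<forall>j<c. \<not> b i < b j \<longrightarrow> (\<Sum>k<c. F' i k * S k j) - (\<Sum>k<c. S i k * F' k j) = 0"
  proof (intro allI impI)
    fix i j assume ij: "i < c" "j < c" "\<not> b i < b j"
    have "(if i < M then x i (M+j) else 0) = 0"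
    proof (cases "i < M")
      case True
      then have "\<not> M \<le> j" using ij lt by auto
      then show ?thesis using cc[of i j] True ij by auto
    qed simp
    then show "(\<Sum>k<c. F' i k * S k j) - (\<Sum>k<c. S i k * F' k j) = 0" using bb[OF ij(1,2)] by simp
  qed
  obtain l where l: "\<forall>i<c. \<forall>j<c. S i j = (if i = j then l else 0)"
    using g Ss Sp Sc unfolding good_def by blast
  have q: "x i (M+j) = 0" if "i < M" "j < c" for i j
  proof -
    have ic: "i < c" using that Mc by simp
    have e1: "(\<Sum>k<c. F' i k * S k j) = (\<Sum>k<c. if k = j then F' i k * l else 0)"
      using l that by (intro sum.cong) auto
    have e2: "(\<Sum>k<c. S i k * F' k j) = (\<Sum>k<c. if k = i then l * F' k j else 0)"
      using l ic by (intro sum.cong) auto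
    show ?thesis using bb[OF ic that(2)] e1 e2 that ic by simp
  qed
  show "\<exists>l. \<forall>i<M+c. \<forall>j<M+c. x i j = (if i = j then l else 0)"
  proof (intro exI allI impI)
    fix i j assume ij: "i < M+c" "j < M+c"
    show "x i j = (if i = j then l else 0)"
    proof (cases "M \<le> i")
      case True
      define i' where "i' = i - M"
      have i': "i = M + i'" "i' < c" using ij True unfolding i'_def by auto
      show ?thesis
      proof (cases "M \<le> j")
        case True
        define j' where "j' = j - M"
        have j': "j = M + j'" "j' < c" using ij True unfolding j'_def by auto
        show ?thesis using l i' j' unfolding S_def by auto
      next
        case False
        then have "b j < b i" using lt ij True by auto
        then show ?thesis using xp ij False True by auto
      qed
    next
      case False
      hence iM: "i < M" by simp
      show ?thesis
      proof (cases "M \<le> j")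
        case True
        define j' where "j' = j - M"
        have j': "j = M + j'" "j' < c" using ij True unfolding j'_def by auto
        show ?thesis using q[OF iM j'(2)] j' iM by simp
      next
        case False
        hence jM: "j < M" by simp
        have "x i j = x (M+i) (M+j)" using a[of i j] iM jM Mc by simp
        also have "\<dots> = S i j" unfolding S_def using iM jM Mc by simp
        finally show ?thesis using l iM jM Mc by simp
      qed
    qed
  qed
qed


lemma vs: "vector_space mscale"
  by unfold_locales (auto simp: mscale_def plus_fun_def algebra_simps fun_eq_iff)

definition Bk :: "(nat \<Rightarrow> nat) \<Rightarrow> nat \<Rightarrow> nat" where
  "Bk a i = (LEAST k. i < (\<Sum>j<Suc k. a j))"

lemma Bk_le: "i < (\<Sum>j<Suc k. a j) \<Longrightarrow> Bk a i \<le> k"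
  unfolding Bk_def by (rule Least_le)

lemma sum_mono_k: "k \<le> k' \<Longrightarrow> (\<Sum>j<k. a j) \<le> (\<Sum>j<k'. (a::nat\<Rightarrow>nat) j)"
  by (rule sum_mono2) auto

lemma Bk_eq: assumes "(\<Sum>j<k. a j) \<le> i" "i < (\<Sum>j<Suc k. a j)" shows "Bk a i = k"
  unfolding Bk_def
proof (rule Least_equality)
  show "i < (\<Sum>j<Suc k. a j)" by fact
  fix y assume y: "i < (\<Sum>j<Suc y. a j)"
  show "k \<le> y"
  proof (rule ccontr)
    assume "\<not> k \<le> y"
    hence "Suc y \<le> k" by simp
    from sum_mono_k[OF this, of a] y assms(1) show False by simp
  qed
qed

lemma good_base: "good 1 b F"
  unfolding good_def by (intro allI impI exI[of _ "x 0 0" for x]) auto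

lemma s_pos: "a 0 = 1 \<Longrightarrow> 1 \<le> (\<Sum>j<Suc k. (a::nat\<Rightarrow>nat) j)"
  using sum_mono_k[of 1 "Suc k" a] by simp

lemma good_seq:
  assumes a0: "a 0 = 1" and st: "\<forall>i\<in>{1..r}. a i = \<alpha> i * (\<Sum>j<i. a j)"
  shows "k \<le> r \<Longrightarrow> \<exists>F. good (\<Sum>j<Suc k. a j) (Bk a) F"
proof (induction k)
  case 0
  then show ?case using good_base a0 by auto
next
  case (Suc k)
  define s where "s = (\<Sum>j<Suc k. a j)"
  have s1: "1 \<le> s" unfolding s_def using s_pos a0 by auto
  have as: "a (Suc k) = \<alpha> (Suc k) * s" using st Suc.prems unfolding s_def by auto
  have s': "(\<Sum>j<Suc (Suc k). a j) = s + \<alpha> (Suc k) * s" using as unfolding s_def by simp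
  obtain F0 where F0: "good s (Bk a) F0" using Suc unfolding s_def by auto
  have "t \<le> \<alpha> (Suc k) \<Longrightarrow> \<exists>F. good (s + t * s) (Bk a) F" for t
  proof (induction t)
    case 0
    then show ?case using F0 by auto
  next
    case (Suc t)
    then obtain F1 where F1: "good (s + t * s) (Bk a) F1" by auto
    have lt: "\<forall>i<s. \<forall>j. s \<le> j \<longrightarrow> j < s + (s + t * s) \<longrightarrow> Bk a i < Bk a j"
    proof (intro allI impI)
      fix i j assume h: "i < s" "s \<le> j" "j < s + (s + t * s)"
      have "Bk a i \<le> k" using h(1) Bk_le unfolding s_def by blast
      moreover have "Bk a j = Suc k"
      proof (rule Bk_eq)
        show "(\<Sum>j<Suc k. a j) \<le> j" using h unfolding s_def by simp
        have "s + (s + t * s) \<le> s + \<alpha> (Suc k) * s" using mult_le_mono1[OF Suc.prems, of s] by simp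
        then show "j < (\<Sum>j<Suc (Suc k). a j)" using h s' by linarith
      qed
      ultimately show "Bk a i < Bk a j" by simp
    qed
    have eq: "\<forall>j. s \<le> j \<longrightarrow> j < s + (s + t * s) \<longrightarrow> Bk a j = Bk a s"
    proof (intro allI impI)
      fix j assume h: "s \<le> j" "j < s + (s + t * s)"
      have "s + (s + t * s) \<le> s + \<alpha> (Suc k) * s" using mult_le_mono1[OF Suc.prems, of s] by simp
      then have "j < (\<Sum>j<Suc (Suc k). a j)" "s < (\<Sum>j<Suc (Suc k). a j)"
        using h s' s1 by linarith+
      then have "Bk a j = Suc k" "Bk a s = Suc k"
        using h by (auto intro!: Bk_eq simp: s_def)
      then show "Bk a j = Bk a s" by simp
    qed
    have "s \<le> s + t * s" by simp
    from reduce[OF F1 this lt eq] show ?case by (auto simp: add.assoc)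
  qed
  then show ?case using s' by auto
qed



lemma sum_take_map: "sum_list (take (Suc k) (map a [0..<Suc r])) = (\<Sum>j<Suc (min k r). a j)"
proof (cases "k \<le> r")
  case True
  then have "take (Suc k) [0..<Suc r] = [0..<Suc k]" using take_upt[of 0 "Suc k" "Suc r"] by (simp del: upt_Suc)
  then have "sum_list (take (Suc k) (map a [0..<Suc r])) = sum_list (map a [0..<Suc k])"
    by (simp only: take_map)
  also have "\<dots> = (\<Sum>j<Suc k. a j)"
    by (simp only: interv_sum_list_conv_sum_set_nat set_upt atLeast0LessThan)
  finally show ?thesis using True by (simp add: min_def)
next
  case False
  then show ?thesis by (simp add: interv_sum_list_conv_sum_set_nat atLeast0LessThan min_def)
qed

lemma blk_Bk:
  assumes "i < (\<Sum>j<Suc r. a j)"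
  shows "blk (map a [0..<Suc r]) i = Bk a i"
proof -
  have br: "Bk a i \<le> r" using Bk_le assms by blast
  have bi: "i < (\<Sum>j<Suc (Bk a i). a j)"
    unfolding Bk_def by (rule LeastI) (rule assms)
  show ?thesis unfolding blk_def sum_take_map
  proof (rule Least_equality)
    show "i < (\<Sum>j<Suc (min (Bk a i) r). a j)" using bi br by (simp add: min_def)
    fix y assume y: "i < (\<Sum>j<Suc (min y r). a j)"
    show "Bk a i \<le> y"
    proof (cases "y \<le> r")
      case True
      then show ?thesis using y Bk_le[of i a y] by (simp add: min_def)
    next
      case False
      then show ?thesis using br by simp
    qed
  qed
qed

lemma swap_inner: "(\<Sum>u<n. \<Sum>v<n. \<Sum>k<n. G u v k) = (\<Sum>u<n. \<Sum>k<n. \<Sum>v<n. (G u v k::complex))"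
  by (rule sum.cong[OF refl], rule sum.swap)

lemma swap3: "(\<Sum>u<n. \<Sum>v<n. \<Sum>k<n. G u v k) = (\<Sum>k<n. \<Sum>v<n. \<Sum>u<n. (G u v k::complex))"
proof -
  have "(\<Sum>u<n. \<Sum>v<n. \<Sum>k<n. G u v k) = (\<Sum>u<n. \<Sum>k<n. \<Sum>v<n. G u v k)" by (rule swap_inner)
  also have "\<dots> = (\<Sum>k<n. \<Sum>u<n. \<Sum>v<n. G u v k)" by (rule sum.swap)
  also have "\<dots> = (\<Sum>k<n. \<Sum>v<n. \<Sum>u<n. G u v k)" by (rule swap_inner)
  finally show ?thesis .
qed

lemma comm_tr:
  "(\<Sum>u<n. \<Sum>v<n. F v u * commutator n x y u v) =
   (\<Sum>u<n. \<Sum>v<n. ((\<Sum>k<n. F v k * x k u) - (\<Sum>k<n. x v k * F k u)) * y u v)"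
proof -
  have L: "(\<Sum>u<n. \<Sum>v<n. F v u * commutator n x y u v) =
     (\<Sum>u<n. \<Sum>v<n. \<Sum>k<n. F v u * (x u k * y k v)) - (\<Sum>u<n. \<Sum>v<n. \<Sum>k<n. F v u * (y u k * x k v))"
    unfolding commutator_def by (simp add: right_diff_distrib sum_subtractf sum_distrib_left)
  have R: "(\<Sum>u<n. \<Sum>v<n. ((\<Sum>k<n. F v k * x k u) - (\<Sum>k<n. x v k * F k u)) * y u v) =
     (\<Sum>u<n. \<Sum>v<n. \<Sum>k<n. F v k * x k u * y u v) - (\<Sum>u<n. \<Sum>v<n. \<Sum>k<n. x v k * F k u * y u v)"
    by (simp add: left_diff_distrib sum_subtractf sum_distrib_right)
  have 1: "(\<Sum>u<n. \<Sum>v<n. \<Sum>k<n. F v u * (x u k * y k v)) = (\<Sum>u<n. \<Sum>v<n. \<Sum>k<n. F v k * x k u * y u v)"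
    by (subst swap3) (simp add: mult.assoc)
  have 2: "(\<Sum>u<n. \<Sum>v<n. \<Sum>k<n. F v u * (y u k * x k v)) = (\<Sum>u<n. \<Sum>v<n. \<Sum>k<n. x v k * F k u * y u v)"
    by (subst swap_inner) (simp add: mult.commute mult.left_commute)
  show ?thesis unfolding L R 1 2 ..
qed

lemma tr_comm0: "(\<Sum>u<n. (\<Sum>k<n. F u k * x k u) - (\<Sum>k<n. x u k * F k u)) = (0::complex)"
proof -
  have "(\<Sum>u<n. \<Sum>k<n. x u k * F k u) = (\<Sum>k<n. \<Sum>u<n. x u k * F k u)" by (rule sum.swap)
  then show ?thesis by (simp add: sum_subtractf mult.commute)
qed



lemma dim0: assumes "S \<subseteq> {0}" shows "vector_space.dim mscale S = 0"
proof -
  interpret vector_space mscale by (rule vs)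
  have "S = {} \<or> S = {0}" using assms by auto
  then have "span S = span {}" by auto
  then show "dim S = 0"
    by (metis dim_span dim_span_eq_card_independent independent_empty card.empty)
qed

theorem mainTheorem9:
  fixes r :: nat and \<alpha> a :: "nat \<Rightarrow> nat" and n :: nat
  assumes "r \<ge> 1"
    and "\<forall>i\<in>{1..r}. \<alpha> i \<ge> 1"
    and "a 0 = 1"
    and "\<forall>i\<in>{1..r}. a i = \<alpha> i * (\<Sum>j<i. a j)"
    and "n = (\<Sum>i\<le>r. a i)"
  shows "frobenius n (parabolic_s (map a [0..<Suc r]))"
proof -
  define as where "as = map a [0..<Suc r]"
  have n_eq: "n = (\<Sum>j<Suc r. a j)" using assms(5) lessThan_Suc_atMost by simp
  have nsum: "sum_list as = n" unfolding as_def n_eq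
    by (simp only: interv_sum_list_conv_sum_set_nat set_upt atLeast0LessThan)
  obtain F where F: "good n (Bk a) F" using good_seq[OF assms(3) assms(4) order_refl] n_eq by auto
  have n1: "1 \<le> n" using s_pos[of a r, OF assms(3)] n_eq by simp
  have blkB: "\<And>i. i < n \<Longrightarrow> blk as i = Bk a i" unfolding as_def using blk_Bk n_eq by simp
  define g where "g = parabolic_s as"
  have gchar: "y \<in> g \<longleftrightarrow> (\<forall>i j. (n \<le> i \<or> n \<le> j) \<longrightarrow> y i j = 0) \<and>
      (\<forall>i<n. \<forall>j<n. Bk a j < Bk a i \<longrightarrow> y i j = 0) \<and> (\<Sum>i<n. y i i) = 0" for y
    unfolding g_def parabolic_s_def parabolic_def matsp_def mtrace_def nsum using blkB by auto
  define f where "f = (\<lambda>y::cmat. \<Sum>u<n. \<Sum>v<n. F v u * y u v)"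
  have lin: "linear_on g f"
    unfolding linear_on_def f_def
    by (auto simp: plus_fun_def mscale_def distrib_left sum.distrib sum_distrib_left mult.left_commute)
  have stab0: "stab n g f \<subseteq> {0}"
  proof
    fix x assume xs: "x \<in> stab n g f"
    then have xg: "x \<in> g" and xf: "\<And>y. y \<in> g \<Longrightarrow> f (commutator n x y) = 0"
      unfolding stab_def by auto
    define C where "C = (\<lambda>i j. (\<Sum>k<n. F i k * x k j) - (\<Sum>k<n. x i k * F k j))"
    have fc: "f (commutator n x y) = (\<Sum>u<n. \<Sum>v<n. C v u * y u v)" for y
      unfolding f_def C_def by (rule comm_tr)
    have Coff: "C i j = 0" if ij: "i < n" "j < n" "i \<noteq> j" "\<not> Bk a i < Bk a j" for i j
    proof -
      define y where "y = (\<lambda>u v. if u = j \<and> v = i then (1::complex) else 0)"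
      have yg: "y \<in> g" unfolding gchar y_def using ij by (auto intro!: sum.neutral)
      have "(\<Sum>u<n. \<Sum>v<n. C v u * y u v) = (\<Sum>u<n. if u = j then C i u else 0)"
      proof (rule sum.cong[OF refl])
        fix u assume "u \<in> {..<n}"
        show "(\<Sum>v<n. C v u * y u v) = (if u = j then C i u else 0)"
          unfolding y_def using ij by (cases "u = j") (auto simp: if_distrib cong: if_cong)
      qed
      also have "\<dots> = C i j" using ij by simp
      finally show ?thesis using xf[OF yg] fc by simp
    qed
    have trC: "(\<Sum>u<n. C u u) = 0" unfolding C_def by (rule tr_comm0)
    have Cdiag: "C i i = 0" if i: "i < n" for i
    proof -
      define y where "y = (\<lambda>u v. if u < n \<and> v < n \<and> u = v then (if u = i then (1::complex) else 0) - 1 / of_nat n else 0)"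
      have "(\<Sum>u<n. y u u) = (\<Sum>u<n. (if u = i then (1::complex) else 0)) - (\<Sum>u<n. 1 / of_nat n)"
        unfolding y_def by (simp add: sum_subtractf)
      also have "\<dots> = 0" using i n1 by simp
      finally have yg: "y \<in> g" unfolding gchar y_def by auto
      have "(\<Sum>u<n. \<Sum>v<n. C v u * y u v) = (\<Sum>u<n. C u u * ((if u = i then 1 else 0) - 1 / of_nat n))"
      proof (rule sum.cong[OF refl])
        fix u assume u: "u \<in> {..<n}"
        have "(\<Sum>v<n. C v u * y u v) = (\<Sum>v<n. if v = u then C v u * ((if u = i then 1 else 0) - 1 / of_nat n) else 0)"
          unfolding y_def using u by (intro sum.cong) auto
        then show "(\<Sum>v<n. C v u * y u v) = C u u * ((if u = i then 1 else 0) - 1 / of_nat n)"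
          using u by simp
      qed
      also have "\<dots> = (\<Sum>u<n. if u = i then C u u else 0) - (\<Sum>u<n. C u u) / of_nat n"
      proof -
        have "(\<Sum>u<n. C u u * ((if u = i then 1 else 0) - 1 / of_nat n)) = (\<Sum>u<n. (if u = i then C u u else 0) - C u u / of_nat n)"
          by (intro sum.cong) (auto simp: right_diff_distrib)
        then show ?thesis by (simp only: sum_subtractf sum_divide_distrib)
      qed
      also have "\<dots> = C i i" using i trC by simp
      finally show ?thesis using xf[OF yg] fc by simp
    qed
    have xm: "\<forall>i j. (n \<le> i \<or> n \<le> j) \<longrightarrow> x i j = 0"
      and xp: "\<forall>i<n. \<forall>j<n. Bk a j < Bk a i \<longrightarrow> x i j = 0"
      and xt: "(\<Sum>i<n. x i i) = 0" using xg unfolding gchar by auto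
    have xc: "\<forall>i<n. \<forall>j<n. \<not> Bk a i < Bk a j \<longrightarrow> (\<Sum>k<n. F i k * x k j) - (\<Sum>k<n. x i k * F k j) = 0"
      using Coff Cdiag unfolding C_def by metis
    obtain l where l: "\<forall>i<n. \<forall>j<n. x i j = (if i = j then l else 0)"
      using F xm xp xc unfolding good_def by blast
    have "(\<Sum>i<n. x i i) = of_nat n * l" using l by simp
    then have l0: "l = 0" using xt n1 by simp
    show "x \<in> {0}"
    proof -
      have "x i j = 0" for i j
        using l l0 xm by (cases "i < n \<and> j < n") auto
      then show ?thesis by (simp add: fun_eq_iff)
    qed
  qed
  have "vector_space.dim mscale (stab n g f) = 0"
    using dim0 stab0 by blast
  then have "lie_index n g = 0"
    unfolding lie_index_def using lin by (intro Least_eq_0 exI[of _ f] conjI) simp_all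
  then show ?thesis unfolding frobenius_def g_def as_def .
qed


end
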